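(* Let $\mathcal{V}$ be the vector space of all complex sequences $\vec{a}=(a_n)_{n\ge 0}$, and let $C:\mathcal{V}\to\mathcal{V}$ be the Cesàro matrix acting by matrix multiplication, $(C\vec a)_N=\frac{1}{N+1}\sum_{j=0}^{N}a_j$ for $N\ge 0$. For each $m\in\mathbb{N}_0=\{0,1,2,\dots\}$ let $\vec b_m\in\mathcal{V}$ be the sequence whose $n$-th entry is $0$ for $0\le n<m$ and $\binom{n}{m}$ for $n\ge m$ (i.e. $\vec b_m=(0,\dots,0,\binom{m}{m},\binom{m+1}{m},\binom{m+2}{m},\dots)$ with $m$ leading zeros). Then for each $m\in\mathbb{N}_0$, $$C\vec b_m=\frac{1}{m+1}\vec b_m.$$ Moreover, each of these eigenspaces (the eigenspace of $C$ on $\mathcal{V}$ for the eigenvalue $\frac{1}{m+1}$) is one dimensional.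
   Context: The Cesàro matrix is the infinite lower-triangular matrix $C=[c_{ij}]_{i,j\ge 0}$ with $c_{ij}=\frac{1}{i+1}$ for $j\le i$ and $c_{ij}=0$ for $j>i$; since it is lower triangular, $C\vec a$ is defined for every complex sequence $\vec a$. *)

theory Defs
  imports "HOL-Analysis.Analysis" "HOL-Library.Function_Algebras"
begin

definition seq_scale :: "complex \<Rightarrow> (nat \<Rightarrow> complex) \<Rightarrow> (nat \<Rightarrow> complex)" where
  "seq_scale c a = (\<lambda>n. c * a n)"

definition cesaro :: "(nat \<Rightarrow> complex) \<Rightarrow> (nat \<Rightarrow> complex)" where
  "cesaro a = (\<lambda>N. (\<Sum>j\<le>N. a j) / of_nat (N + 1))"

definition bvec :: "nat \<Rightarrow> (nat \<Rightarrow> complex)" where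
  "bvec m = (\<lambda>n. if n < m then 0 else of_nat (n choose m))"

definition cesaro_eigenspace :: "complex \<Rightarrow> (nat \<Rightarrow> complex) set" where
  "cesaro_eigenspace c = {a. cesaro a = seq_scale c a}"

end

theory Submission
  imports Defs
begin

interpretation sv: vector_space seq_scale
  by unfold_locales (auto simp: seq_scale_def fun_eq_iff algebra_simps)

lemma bvec_alt: "bvec m = (\<lambda>n. of_nat (n choose m))"
  by (auto simp: bvec_def fun_eq_iff)

lemma part1: "cesaro (bvec m) = seq_scale (1 / of_nat (m + 1)) (bvec m)"
proof -
  have "(\<Sum>j\<le>N. (of_nat (j choose m)::complex)) / of_nat (N + 1)
        = 1 / of_nat (m + 1) * of_nat (N choose m)" for N
  proof -
    have s: "(\<Sum>j\<le>N. (of_nat (j choose m)::complex)) = of_nat (Suc N choose Suc m)"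
      by (metis of_nat_sum sum_choose_upper)
    have e: "(of_nat (Suc N * (N choose m))::complex) = of_nat ((Suc N choose Suc m) * Suc m)"
      by (metis Suc_times_binomial_eq)
    have e2: "of_nat (Suc N) * (of_nat (N choose m)::complex) = of_nat (Suc N choose Suc m) * of_nat (Suc m)"
      using e by (simp only: of_nat_mult)
    have nz1: "(of_nat (Suc N)::complex) \<noteq> 0" and nz2: "(of_nat (Suc m)::complex) \<noteq> 0"
      by (simp_all only: of_nat_eq_0_iff)
    have "(of_nat (Suc N choose Suc m)::complex) / of_nat (Suc N) = of_nat (N choose m) / of_nat (Suc m)"
      using e2 nz1 nz2 by (simp add: frac_eq_eq mult.commute)
    then show ?thesis unfolding s by simp
  qed
  then show ?thesis by (simp add: cesaro_def seq_scale_def bvec_alt fun_eq_iff)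
qed

lemma recur:
  assumes "cesaro a = seq_scale (1 / of_nat (m + 1)) a"
  shows "of_nat (m+1) * (\<Sum>j\<le>N. a j) = of_nat (N+1) * a N"
proof -
  have "(\<Sum>j\<le>N. a j) / of_nat (N + 1) = 1 / of_nat (m + 1) * a N"
    using assms by (auto simp: cesaro_def seq_scale_def fun_eq_iff)
  moreover have "(of_nat (N+1)::complex) \<noteq> 0" "(of_nat (m+1)::complex) \<noteq> 0"
    by (simp_all only: of_nat_eq_0_iff)
  ultimately show ?thesis by (simp add: frac_eq_eq mult.commute)
qed

lemma recur2:
  assumes "cesaro a = seq_scale (1 / of_nat (m + 1)) a"
  shows "of_nat (N+1) * a N = (of_nat (N+1) - of_nat m) * a (Suc N)"
proof -
  have 1: "of_nat (m+1) * (\<Sum>j\<le>N. a j) = of_nat (N+1) * a N" using recur[OF assms] .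
  have 2: "of_nat (m+1) * (\<Sum>j\<le>Suc N. a j) = of_nat (Suc N+1) * a (Suc N)" using recur[OF assms] .
  from 2 have "of_nat (m+1) * (\<Sum>j\<le>N. a j) + of_nat (m+1) * a (Suc N) = of_nat (N+2) * a (Suc N)"
    by (simp add: distrib_left)
  with 1 show ?thesis by (simp add: algebra_simps)
qed

lemma zero_eig:
  assumes "cesaro a = seq_scale (1 / of_nat (m + 1)) a" and "a m = 0"
  shows "a N = 0"
proof (induction N)
  case 0
  have "of_nat (m+1) * a 0 = of_nat 1 * a 0" using recur[OF assms(1), of 0] by simp
  then have "of_nat m * a 0 = 0" by (simp add: algebra_simps)
  then show ?case using assms(2) by (cases "m = 0") auto
next
  case (Suc N)
  have "(of_nat (N+1) - of_nat m) * a (Suc N) = 0" using recur2[OF assms(1), of N] Suc by simp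
  moreover have "Suc N \<noteq> m \<Longrightarrow> (of_nat (N+1) - of_nat m :: complex) \<noteq> 0"
    by (metis Suc_eq_plus1 eq_iff_diff_eq_0 of_nat_eq_iff)
  ultimately show ?case using assms(2) by (cases "Suc N = m") auto
qed

lemma eig_eq: "cesaro_eigenspace (1 / of_nat (m + 1)) = sv.span {bvec m}"
proof
  show "cesaro_eigenspace (1 / of_nat (m + 1)) \<subseteq> sv.span {bvec m}"
  proof
    fix a assume "a \<in> cesaro_eigenspace (1 / of_nat (m + 1))"
    then have ea: "cesaro a = seq_scale (1 / of_nat (m + 1)) a" by (simp add: cesaro_eigenspace_def)
    define d where "d = a - seq_scale (a m) (bvec m)"
    have p: "a m * (\<Sum>j\<le>x. bvec m j) / of_nat (x+1) = a m * bvec m x / of_nat (m+1)" for x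
    proof -
      have "(\<Sum>j\<le>x. bvec m j) / of_nat (x+1) = 1 / of_nat (m+1) * bvec m x"
        using part1[of m] by (simp add: cesaro_def seq_scale_def fun_eq_iff)
      then have "a m * ((\<Sum>j\<le>x. bvec m j) / of_nat (x+1)) = a m * (1 / of_nat (m+1) * bvec m x)"
        by (rule arg_cong)
      then show ?thesis by simp
    qed
    have dN: "d N = a N - a m * bvec m N" for N by (simp add: d_def seq_scale_def)
    have "cesaro d N = seq_scale (1 / of_nat (m + 1)) d N" for N
    proof -
      have ea': "(\<Sum>j\<le>N. a j) / of_nat (N+1) = 1 / of_nat (m+1) * a N"
        using ea by (simp add: cesaro_def seq_scale_def fun_eq_iff)
      have "cesaro d N = (\<Sum>j\<le>N. a j) / of_nat (N+1) - a m * (\<Sum>j\<le>N. bvec m j) / of_nat (N+1)"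
        by (simp only: cesaro_def dN sum_subtractf sum_distrib_left[symmetric] diff_divide_distrib)
      also have "... = 1 / of_nat (m+1) * a N - a m * bvec m N / of_nat (m+1)"
        using ea' p[of N] by simp
      also have "... = seq_scale (1 / of_nat (m + 1)) d N"
        by (simp add: seq_scale_def dN diff_divide_distrib right_diff_distrib)
      finally show ?thesis .
    qed
    then have "cesaro d = seq_scale (1 / of_nat (m + 1)) d" by (rule ext)
    moreover have "d m = 0" by (simp add: dN bvec_def)
    ultimately have "\<And>N. d N = 0" using zero_eig by blast
    then have "a N = seq_scale (a m) (bvec m) N" for N using dN[of N] by (simp add: seq_scale_def)
    then have "a = seq_scale (a m) (bvec m)" by (rule ext)
    then show "a \<in> sv.span {bvec m}" by (simp add: sv.span_singleton)
  qed
next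
  show "sv.span {bvec m} \<subseteq> cesaro_eigenspace (1 / of_nat (m + 1))"
  proof
    fix a assume "a \<in> sv.span {bvec m}"
    then obtain k where "a = seq_scale k (bvec m)" by (auto simp: sv.span_singleton)
    have "cesaro a N = seq_scale (1 / of_nat (m + 1)) a N" for N
    proof -
      have h: "(\<Sum>j\<le>N. bvec m j) / of_nat (N+1) = 1 / of_nat (m+1) * bvec m N"
        using part1[of m] by (simp add: cesaro_def seq_scale_def fun_eq_iff)
      have "cesaro a N = k * ((\<Sum>j\<le>N. bvec m j) / of_nat (N+1))"
        using \<open>a = _\<close> by (simp add: cesaro_def seq_scale_def sum_distrib_left[symmetric])
      also have "... = k * (1 / of_nat (m+1) * bvec m N)" by (simp only: h)
      also have "... = seq_scale (1 / of_nat (m + 1)) a N"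
        using \<open>a = _\<close> by (simp add: seq_scale_def)
      finally show ?thesis .
    qed
    then show "a \<in> cesaro_eigenspace (1 / of_nat (m + 1))"
      by (simp add: cesaro_eigenspace_def fun_eq_iff)
  qed
qed

lemma bvec_nz: "bvec m \<noteq> 0"
proof
  assume "bvec m = 0"
  then have "bvec m m = 0" by simp
  then show False by (simp add: bvec_def)
qed

theorem mainTheorem1:
  shows "(\<forall>m::nat. cesaro (bvec m) = seq_scale (1 / of_nat (m + 1)) (bvec m)) \<and>
         (\<forall>m::nat. vector_space.dim seq_scale (cesaro_eigenspace (1 / of_nat (m + 1))) = 1)"
proof (intro conjI allI)
  fix m :: nat
  show "cesaro (bvec m) = seq_scale (1 / of_nat (m + 1)) (bvec m)" by (rule part1)
  have "sv.independent {bvec m}" using bvec_nz by simp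
  then show "sv.dim (cesaro_eigenspace (1 / of_nat (m + 1))) = 1"
    unfolding eig_eq using sv.dim_span_eq_card_independent by fastforce
qed

end
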